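(* In the setting below, suppose $p\geq5$. Then for all distinct $i,j,k\in\mathbb Z/N\mathbb Z$ we have $\#(P_{ij}\cap P_{jk})\geq2$.
   Context: Setting: $p,q$ distinct primes, $N=p+q$; $M=(m_{ik})_{i,k\in\mathbb Z/N\mathbb Z}$ has entries in $\mathbb Z/pq\mathbb Z$ and $(e^{2\pi i\,m_{ik}/pq})$ is a complex Hadamard matrix (unimodular entries, orthogonal rows). $L_i(k)=m_{ik}$, $L_{ij}=L_j-L_i$. For $d\mid pq$, $d(\mathbb Z/pq\mathbb Z)$ is the subgroup of multiples of $d$. For distinct $i,j$ there is a partition $\mathbb Z/N\mathbb Z=P_{ij}\sqcup Q_{ij}\sqcup R_{ij}$ and $r\in\mathbb Z/pq\mathbb Z$ with: $\#R_{ij}=2$ and $L_{ij}\equiv r$ on $R_{ij}$; $\#P_{ij}=p-1$ and $L_{ij}(P_{ij})=(r+q(\mathbb Z/pq\mathbb Z))\setminus\{r\}$; $\#Q_{ij}=q-1$ and $L_{ij}(Q_{ij})=(r+p(\mathbb Z/pq\mathbb Z))\setminus\{r\}$. This partition is unique ($R_{ij}$ is the pair of indices where $L_{ij}$ takes its unique repeated value). Put $P^+_{ij}=P_{ij}\cup R_{ij}$, $Q^+_{ij}=Q_{ij}\cup R_{ij}$. *)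

theory Defs
  imports Complex_Main "HOL-Computational_Algebra.Primes"
begin

text \<open>Indices of Z/NZ are represented by {..<N}; entries of Z/pqZ by integers in {0..<p*q}.\<close>

definition hadamard_exp :: "nat \<Rightarrow> nat \<Rightarrow> nat \<Rightarrow> (nat \<Rightarrow> nat \<Rightarrow> int) \<Rightarrow> bool" where
  "hadamard_exp p q N m \<longleftrightarrow>
     (\<forall>i<N. \<forall>k<N. m i k \<in> {0..<int (p*q)}) \<and>
     (\<forall>i<N. \<forall>j<N. i \<noteq> j \<longrightarrow>
        (\<Sum>k<N. cis (2 * pi * real_of_int (m i k - m j k) / real (p*q))) = 0)"

definition Lij :: "nat \<Rightarrow> nat \<Rightarrow> (nat \<Rightarrow> nat \<Rightarrow> int) \<Rightarrow> nat \<Rightarrow> nat \<Rightarrow> nat \<Rightarrow> int" where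
  "Lij p q m i j k = (m j k - m i k) mod int (p*q)"

definition is_PQR :: "nat \<Rightarrow> nat \<Rightarrow> nat \<Rightarrow> (nat \<Rightarrow> nat \<Rightarrow> int) \<Rightarrow> nat \<Rightarrow> nat
    \<Rightarrow> nat set \<Rightarrow> nat set \<Rightarrow> nat set \<Rightarrow> int \<Rightarrow> bool" where
  "is_PQR p q N m i j P Q R r \<longleftrightarrow>
     P \<union> Q \<union> R = {..<N} \<and> P \<inter> Q = {} \<and> P \<inter> R = {} \<and> Q \<inter> R = {} \<and>
     r \<in> {0..<int (p*q)} \<and>
     card R = 2 \<and> (\<forall>k\<in>R. Lij p q m i j k = r) \<and>
     card P = p - 1 \<and>
     Lij p q m i j ` P = {x \<in> {0..<int (p*q)}. x mod int q = r mod int q} - {r} \<and>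
     card Q = q - 1 \<and>
     Lij p q m i j ` Q = {x \<in> {0..<int (p*q)}. x mod int p = r mod int p} - {r}"

end

theory Submission
  imports Defs Complex_Main "HOL-Computational_Algebra.Computational_Algebra" "HOL-Number_Theory.Cong"
begin

definition ev :: "complex \<Rightarrow> int poly \<Rightarrow> complex" where
  "ev z g = poly (map_poly of_int g) z"

lemma mp_add: "map_poly (of_int :: int \<Rightarrow> complex) (p + q) = map_poly of_int p + map_poly of_int q"
  by (simp add: poly_eq_iff coeff_map_poly)

lemma mp_diff: "map_poly (of_int :: int \<Rightarrow> complex) (p - q) = map_poly of_int p - map_poly of_int q"
  by (simp add: poly_eq_iff coeff_map_poly)

lemma mp_smult: "map_poly (of_int :: int \<Rightarrow> complex) (smult a q) = smult (of_int a) (map_poly of_int q)"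
  by (simp add: poly_eq_iff coeff_map_poly)

lemma mp_mult: "map_poly (of_int :: int \<Rightarrow> complex) (p * q) = map_poly of_int p * map_poly of_int q"
proof (induction p)
  case 0 then show ?case by simp
next
  case (pCons a p)
  show ?case
    by (simp add: mult_pCons_left mp_add mp_smult map_poly_pCons pCons.IH)
qed

lemma ev_add[simp]: "ev z (p + q) = ev z p + ev z q" by (simp add: ev_def mp_add)
lemma ev_diff[simp]: "ev z (p - q) = ev z p - ev z q" by (simp add: ev_def mp_diff)
lemma ev_mult[simp]: "ev z (p * q) = ev z p * ev z q" by (simp add: ev_def mp_mult)
lemma ev_smult[simp]: "ev z (smult a q) = of_int a * ev z q" by (simp add: ev_def mp_smult)
lemma ev_monom[simp]: "ev z (monom c k) = of_int c * z ^ k"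
  by (simp add: ev_def map_poly_monom poly_monom)
lemma ev_one[simp]: "ev z 1 = 1" by (simp add: ev_def)
lemma ev_const[simp]: "ev z [:c:] = of_int c" using ev_monom[of z c 0] by (simp add: monom_0)
lemma ev_power[simp]: "ev z (p ^ k) = ev z p ^ k" by (induction k) auto
lemma ev_zero[simp]: "ev z 0 = 0" by (simp add: ev_def)
lemma ev_sum: "ev z (\<Sum>t\<in>A. f t) = (\<Sum>t\<in>A. ev z (f t))"
  by (induction A rule: infinite_finite_induct) auto
lemma ev_pcompose: "ev z (pcompose p q) = ev (ev z q) p"
proof (induction p)
  case 0 then show ?case by (simp add: ev_def)
next
  case (pCons a p)
  have "ev z (pcompose (pCons a p) q) = of_int a + ev z q * ev (ev z q) p"
    by (simp add: pcompose_pCons pCons.IH)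
  also have "\<dots> = ev (ev z q) (pCons a p)"
    by (simp add: ev_def map_poly_pCons)
  finally show ?case .
qed

lemma freshman:
  fixes u v :: "'a :: comm_ring_1"
  assumes "prime l"
  shows "of_nat l dvd ((u + v) ^ l - u ^ l - v ^ l)"
proof -
  have l0: "l > 0" using assms prime_gt_0_nat by blast
  have "(u + v) ^ l = (\<Sum>k\<le>l. of_nat (l choose k) * u ^ k * v ^ (l - k))"
    by (rule binomial_ring)
  also have "{..l} = insert 0 (insert l {1..<l})" using l0 by auto
  also have "(\<Sum>k\<in>insert 0 (insert l {1..<l}). of_nat (l choose k) * u ^ k * v ^ (l - k))
     = v ^ l + (u ^ l + (\<Sum>k\<in>{1..<l}. of_nat (l choose k) * u ^ k * v ^ (l - k)))"
    using l0 by (simp add: sum.insert)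
  finally have eq: "(u + v) ^ l - u ^ l - v ^ l = (\<Sum>k\<in>{1..<l}. of_nat (l choose k) * u ^ k * v ^ (l - k))"
    by (simp add: algebra_simps)
  have "of_nat l dvd (\<Sum>k\<in>{1..<l}. of_nat (l choose k) * u ^ k * v ^ (l - k))"
  proof (rule dvd_sum)
    fix k assume k: "k \<in> {1..<l}"
    have "l dvd (l choose k)" using k assms l0 by (intro dvd_choose_prime) auto
    then obtain m where "l choose k = l * m" by blast
    then have "(of_nat l :: 'a) dvd of_nat (l choose k)" by simp
    then show "of_nat l dvd of_nat (l choose k) * u ^ k * v ^ (l - k)"
      by (simp add: mult.assoc)
  qed
  with eq show ?thesis by simp
qed

lemma dvd_diff_power:
  fixes a b :: "'a :: comm_ring_1"
  shows "(a - b) dvd (a ^ k - b ^ k)"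
proof (induction k)
  case 0 then show ?case by simp
next
  case (Suc k)
  have "a ^ Suc k - b ^ Suc k = a * (a ^ k - b ^ k) + (a - b) * b ^ k"
    by (simp add: algebra_simps)
  then show ?case using Suc by (simp add: dvd_add dvd_mult)
qed

lemma cong_pow_gen:
  fixes a b c :: "'a :: comm_ring_1"
  assumes "c dvd (a - b)"
  shows "c dvd (a ^ k - b ^ k)"
  using assms dvd_diff_power dvd_trans by blast

lemma fermat_int:
  fixes a :: int
  assumes "prime l"
  shows "int l dvd (a ^ l - a)"
proof -
  have nat_case: "int l dvd (int b ^ l - int b)" for b :: nat
  proof (induction b)
    case 0 then show ?case using assms prime_gt_0_nat by (simp add: zero_power)
  next
    case (Suc b)
    have f: "int l dvd ((int b + 1) ^ l - int b ^ l - 1 ^ l)"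
      using freshman[OF assms, of "int b" 1] by (simp add: add.commute)
    have "(int (Suc b)) ^ l - int (Suc b) = ((int b + 1) ^ l - int b ^ l - 1 ^ l) + (int b ^ l - int b)"
      by (simp add: add.commute)
    then show ?case using f Suc by (metis dvd_add)
  qed
  have lp: "int l > 0" using assms prime_gt_0_nat by simp
  define b where "b = nat (a mod int l)"
  have bb: "int b = a mod int l" using lp by (simp add: b_def)
  have "int l dvd (a - int b)" using bb by (simp add: mod_eq_dvd_iff mod_mod_trivial)
  hence "int l dvd (a ^ l - int b ^ l)" by (rule cong_pow_gen)
  moreover have "int l dvd (int b - a)" using \<open>int l dvd (a - int b)\<close> by (metis dvd_minus_iff minus_diff_eq)
  ultimately have "int l dvd ((a ^ l - int b ^ l) + (int b ^ l - int b) + (int b - a))"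
    using nat_case[of b] by (intro dvd_add) auto
  then show ?thesis by simp
qed

lemma frob_poly:
  fixes h :: "int poly"
  assumes "prime l"
  shows "(of_nat l :: int poly) dvd (pcompose h (monom 1 l) - h ^ l)"
proof (induction h)
  case 0 then show ?case using assms prime_gt_0_nat by (simp add: zero_power)
next
  case (pCons a h)
  let ?c = "(of_nat l :: int poly)"
  let ?X = "monom (1::int) 1"
  have hX: "pCons a h = [:a:] + ?X * h"
    by (simp add: poly_eq_iff coeff_pCons coeff_monom_mult split: nat.splits) 
  have Xl: "?X ^ l = monom 1 l" by (simp add: monom_power)
  have D1: "?c dvd (([:a:] + ?X * h) ^ l - [:a:] ^ l - (?X * h) ^ l)"
    by (rule freshman[OF assms])
  have "int l dvd (a ^ l - a)" by (rule fermat_int[OF assms])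
  have e2: "[:a:] ^ l - [:a:] = [:a ^ l - a:]" by (simp add: poly_const_pow)
  hence D2: "?c dvd ([:a:] ^ l - [:a:])"
    using \<open>int l dvd (a ^ l - a)\<close> by (simp add: of_nat_poly const_poly_dvd_const_poly_iff)
  have D3: "?c dvd (monom 1 l * (pcompose h (monom 1 l) - h ^ l))"
    using pCons.IH by simp
  have e1: "pcompose (pCons a h) (monom 1 l) = [:a:] + monom 1 l * pcompose h (monom 1 l)"
    by (simp add: pcompose_pCons)
  have e3: "(pCons a h) ^ l = ([:a:] + ?X * h) ^ l" by (simp only: hX)
  have e4: "(?X * h) ^ l = monom 1 l * h ^ l" by (simp only: power_mult_distrib Xl)
  have eq: "pcompose (pCons a h) (monom 1 l) - (pCons a h) ^ l =
     monom 1 l * (pcompose h (monom 1 l) - h ^ l) - (([:a:] + ?X * h) ^ l - [:a:] ^ l - (?X * h) ^ l)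
     - ([:a:] ^ l - [:a:])"
    unfolding e1 e3 e4 by (simp add: algebra_simps)
  show ?case unfolding eq by (rule dvd_diff[OF dvd_diff[OF D3 D1] D2])
qed

lemma lemma_c:
  fixes f A :: "int poly"
  assumes "prime l" "lead_coeff f = 1" "degree f \<ge> 1"
    and "(of_nat l :: int poly) dvd ([:c:] - f * A)"
  shows "int l dvd c"
proof -
  have lp: "int l > 0" using assms(1) prime_gt_0_nat by simp
  define A' where "A' = map_poly (\<lambda>a. a mod int l) A"
  define A'' where "A'' = map_poly (\<lambda>a. a div int l) A"
  have AA: "A = A' + smult (int l) A''"
    by (simp add: poly_eq_iff A'_def A''_def coeff_map_poly)
  have cA: "coeff A' i \<in> {0..<int l}" for i
    using lp by (simp add: A'_def coeff_map_poly)
  have "(of_nat l :: int poly) dvd ([:c:] - f * A')"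
  proof -
    have eqA: "[:c:] - f * A' = ([:c:] - f * A) + of_nat l * (f * A'')"
      by (subst AA) (simp add: algebra_simps of_nat_poly)
    show ?thesis by (simp only: eqA) (intro dvd_add assms(4) dvd_triv_left)
  qed
  hence dv: "int l dvd coeff ([:c:] - f * A') k" for k
    by (simp add: of_nat_poly const_poly_dvd_iff)
  show ?thesis
  proof (cases "A' = 0")
    case True
    then show ?thesis using dv[of 0] by simp
  next
    case False
    let ?d = "degree f + degree A'"
    have f0: "f \<noteq> 0" using assms(2) by auto
    have deg: "degree (f * A') = ?d" using f0 False by (simp add: degree_mult_eq)
    have lc: "coeff (f * A') ?d = lead_coeff A'"
      using deg by (metis assms(2) lead_coeff_mult mult_1)
    have "coeff ([:c:] - f * A') ?d = - lead_coeff A'"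
      using lc assms(3) by (simp add: coeff_pCons split: nat.splits)
    hence "int l dvd lead_coeff A'" using dv[of ?d] by simp
    moreover have lc0: "lead_coeff A' \<noteq> 0" using False by simp
    moreover have c1: "0 \<le> lead_coeff A'" "lead_coeff A' < int l" using cA[of "degree A'"] by auto
    moreover have "lead_coeff A' > 0" using lc0 c1 by (auto simp: order_less_le)
    ultimately show ?thesis using zdvd_imp_le by fastforce
  qed
qed

lemma prim_dvd:
  fixes f g :: "int poly"
  assumes "content f = 1" "c \<noteq> 0" "f dvd smult c g"
  shows "f dvd g"
proof -
  obtain s where s: "smult c g = f * s" using assms(3) by blast
  have "content s = content (f * s)" by (simp add: content_mult assms(1))
  also have "\<dots> = \<bar>c\<bar> * content g" by (simp flip: s)
  finally have "c dvd content s" by simp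
  hence "c dvd coeff s i" for i using content_dvd_coeff dvd_trans by blast
  hence "[:c:] dvd s" by (simp add: const_poly_dvd_iff)
  then obtain s' where s': "s = [:c:] * s'" by blast
  have "smult c g = smult c (f * s')" using s s' by (simp add: algebra_simps)
  hence "g = f * s'" using assms(2) by (metis smult_cancel)
  then show ?thesis by simp
qed

definition minp :: "complex \<Rightarrow> int poly \<Rightarrow> bool" where
  "minp z f \<longleftrightarrow> lead_coeff f = 1 \<and> ev z f = 0 \<and> (\<forall>g. ev z g = 0 \<longrightarrow> f dvd g)"

lemma ev_Xn1: "ev z (monom 1 n - 1) = z ^ n - 1" by simp

lemma coeff_Xn1: "n > 0 \<Longrightarrow> coeff (monom (1::int) n - 1) n = 1"
  by (simp add: coeff_1)

lemma Xn1_ne0: "n > 0 \<Longrightarrow> (monom (1::int) n - 1) \<noteq> 0"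
proof
  assume "n > 0" "monom (1::int) n - 1 = 0"
  hence "coeff (monom (1::int) n - 1) n = 0" by simp
  with coeff_Xn1[OF \<open>n > 0\<close>] show False by simp
qed

lemma lc_Xn1: "n > 0 \<Longrightarrow> lead_coeff (monom (1::int) n - 1) = 1"
proof -
  assume n: "n > 0"
  have "degree (monom (1::int) n - 1) \<le> n"
    by (intro degree_diff_le degree_monom_le) simp
  moreover have "degree (monom (1::int) n - 1) \<ge> n"
    using coeff_Xn1[OF n] by (intro le_degree) simp
  ultimately have "degree (monom (1::int) n - 1) = n" by simp
  thus ?thesis using coeff_Xn1[OF n] by simp
qed

lemma minp_exists:
  assumes "z ^ n = 1" "n > 0"
  shows "\<exists>f. minp z f"
proof -
  let ?S = "{g::int poly. g \<noteq> 0 \<and> ev z g = 0}"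
  have FS: "monom 1 n - 1 \<in> ?S" using assms Xn1_ne0 by simp
  obtain f0 where f0: "f0 \<in> ?S" and mn: "\<And>g. g \<in> ?S \<Longrightarrow> degree f0 \<le> degree g"
    using ex_has_least_nat[of "\<lambda>g. g \<in> ?S" _ degree, OF FS] by blast
  define f1 where "f1 = primitive_part f0"
  have f0eq: "f0 = smult (content f0) f1" by (simp add: f1_def)
  have c0: "content f0 \<noteq> 0" using f0 by simp
  have "ev z f0 = of_int (content f0) * ev z f1" by (subst f0eq) simp
  moreover have "ev z f0 = 0" using f0 by simp
  ultimately have f1z: "ev z f1 = 0" using c0 by simp
  have f1ne: "f1 \<noteq> 0" using f0 by (simp add: f1_def)
  have cf1: "content f1 = 1" using f0 by (simp add: f1_def)
  have degf1: "degree f1 = degree f0" by (simp add: f1_def)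
  have f1dvd: "f1 dvd g" if g: "ev z g = 0" for g
  proof -
    obtain qq r where pd: "pseudo_divmod g f1 = (qq, r)" by fastforce
    note pdd = pseudo_divmod[OF f1ne pd]
    define c where "c = lead_coeff f1 ^ (Suc (degree g) - degree f1)"
    have cne: "c \<noteq> 0" using f1ne by (simp add: c_def)
    have eq: "smult c g = f1 * qq + r" using pdd(1) by (simp add: c_def)
    have "ev z r = 0"
    proof -
      have "ev z (smult c g) = ev z (f1 * qq + r)" using eq by simp
      thus ?thesis using g f1z by simp
    qed
    have "r = 0"
    proof (rule ccontr)
      assume "r \<noteq> 0"
      with \<open>ev z r = 0\<close> have "r \<in> ?S" by simp
      hence "degree f0 \<le> degree r" by (rule mn)
      moreover have "degree r < degree f1" using pdd(2) \<open>r \<noteq> 0\<close> by simp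
      ultimately show False using degf1 by simp
    qed
    hence "f1 dvd smult c g" using eq by simp
    thus ?thesis by (rule prim_dvd[OF cf1 cne])
  qed
  have "f1 dvd (monom 1 n - 1)" using f1dvd assms by simp
  then obtain s where s: "monom 1 n - 1 = f1 * s" by blast
  have "lead_coeff f1 * lead_coeff s = 1" using lc_Xn1[OF assms(2)] s by (simp add: lead_coeff_mult)
  hence u: "lead_coeff f1 = 1 \<or> lead_coeff f1 = -1" using zmult_eq_1_iff by blast
  define u where "u = lead_coeff f1"
  have uu: "u * u = 1" using u by (auto simp: u_def)
  define f where "f = smult u f1"
  have "lead_coeff f = 1" using uu f1ne by (simp add: f_def u_def)
  moreover have "ev z f = 0" by (simp add: f_def f1z)
  moreover have "f dvd g" if gz: "ev z g = 0" for g
  proof -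
    obtain t where t: "g = f1 * t" using f1dvd[OF gz] by blast
    have "g = f * smult u t" using uu by (simp add: t f_def mult.commute)
    thus ?thesis by (rule dvdI)
  qed
  ultimately show ?thesis unfolding minp_def by blast
qed

lemma minp_deg:
  assumes "minp z f" shows "degree f \<ge> 1"
proof (rule ccontr)
  assume "\<not> degree f \<ge> 1"
  hence "degree f = 0" by simp
  hence "f = [:lead_coeff f:]" by (metis degree_0_id)
  hence "f = 1" using assms by (simp add: minp_def one_pCons)
  thus False using assms by (simp add: minp_def)
qed

lemma frob_root:
  assumes zn: "z ^ n = 1" and n: "n > 0" and mp: "minp z f" and l: "prime l" and ln: "\<not> l dvd n"
  shows "ev (z ^ l) f = 0"
proof (rule ccontr)
  assume nz: "ev (z ^ l) f \<noteq> 0"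
  let ?F = "monom (1::int) n - 1"
  let ?X = "monom (1::int) 1"
  have "f dvd ?F" using mp zn by (simp add: minp_def)
  then obtain h where Fh: "?F = f * h" by blast
  have "ev (z ^ l) ?F = 0" using zn by (simp flip: power_mult add: mult.commute[of l n] power_mult)
  hence "ev (z ^ l) f * ev (z ^ l) h = 0" by (simp add: Fh)
  hence hz: "ev (z ^ l) h = 0" using nz by simp
  define k where "k = pcompose h (monom 1 l)"
  have "ev z k = 0" using hz by (simp add: k_def ev_pcompose)
  hence "f dvd k" using mp by (simp add: minp_def)
  then obtain u where ku: "k = f * u" by blast
  have "(of_nat l :: int poly) dvd (k - h ^ l)" unfolding k_def by (rule frob_poly[OF l])
  then obtain w where kw: "k - h ^ l = of_nat l * w" by blast
  have pdF: "pderiv ?F = monom (of_nat n) (n - 1)" by (simp add: pderiv_diff pderiv_monom)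
  have idn: "[:int n:] = ?X * pderiv ?F - smult (int n) ?F"
  proof -
    have "?X * monom (of_nat n) (n - 1) = monom (int n) n" using n by (simp add: mult_monom)
    thus ?thesis by (simp add: pdF smult_diff_right monom_0 smult_monom)
  qed
  define B0 where "B0 = ?X * pderiv f * h"
  define V where "V = ?X * pderiv h - smult (int n) h"
  have "[:int n:] = f * V + B0"
    unfolding idn Fh pderiv_mult B0_def V_def by (simp add: algebra_simps)
  hence "(f * V) dvd ([:int n:] ^ l - B0 ^ l)" using dvd_diff_power[of "[:int n:]" B0 l] by simp
  then obtain W where W: "[:int n:] ^ l - B0 ^ l = f * V * W" by blast
  have hl: "h ^ l = f * u - of_nat l * w" using kw ku by (simp add: algebra_simps)
  have B0l: "B0 ^ l = (?X * pderiv f) ^ l * h ^ l" by (simp add: B0_def power_mult_distrib)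
  define A where "A = V * W + (?X * pderiv f) ^ l * u"
  have "[:int n ^ l:] - f * A = - (of_nat l * ((?X * pderiv f) ^ l * w))"
  proof -
    have "[:int n ^ l:] = [:int n:] ^ l" by (simp add: poly_const_pow)
    also have "\<dots> = f * V * W + B0 ^ l" using W by (simp add: algebra_simps)
    also have "\<dots> = f * V * W + (?X * pderiv f) ^ l * (f * u - of_nat l * w)" by (simp add: B0l hl)
    finally show ?thesis by (simp add: A_def algebra_simps)
  qed
  hence "(of_nat l :: int poly) dvd ([:int n ^ l:] - f * A)" by simp
  hence "int l dvd int n ^ l"
    using lemma_c[OF l _ minp_deg[OF mp]] mp by (simp add: minp_def)
  hence "l dvd n ^ l" by (metis of_nat_dvd_iff of_nat_power)
  hence "l dvd n" using l prime_dvd_power by blast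
  thus False using ln by simp
qed

lemma galois_aux:
  assumes n: "n > 0" and a: "a > 0" "coprime a n"
  shows "\<forall>z f. z ^ n = 1 \<longrightarrow> minp z f \<longrightarrow> ev (z ^ a) f = 0"
  using a
proof (induction a rule: less_induct)
  case (less a)
  show ?case
  proof (cases "a = 1")
    case True then show ?thesis by (auto simp: minp_def)
  next
    case False
    then obtain l where l: "prime l" "l dvd a" using prime_factor_nat by blast
    then obtain b where ab: "a = l * b" by blast
    have b0: "b > 0" using less.prems ab by auto
    have bl: "b < a" using ab l b0 prime_gt_1_nat by fastforce
    have cb: "coprime b n" using less.prems ab by simp
    have ln: "\<not> l dvd n"
      using less.prems(2) l by (metis coprime_common_divisor not_prime_unit)
    show ?thesis
    proof (intro allI impI)
      fix z f assume zn: "z ^ n = (1::complex)" and mp: "minp z f"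
      have "ev (z ^ b) f = 0" using less.IH[OF bl b0 cb] zn mp by blast
      have zbn: "(z ^ b) ^ n = 1" using zn by (metis power_mult mult.commute power_one)
      obtain f' where mp': "minp (z ^ b) f'" using minp_exists[OF zbn n] by blast
      have "f' dvd f" using mp' \<open>ev (z ^ b) f = 0\<close> by (simp add: minp_def)
      then obtain s where s: "f = f' * s" by blast
      have "ev ((z ^ b) ^ l) f' = 0" by (rule frob_root[OF zbn n mp' l(1) ln])
      hence "ev ((z ^ b) ^ l) f = 0" by (simp add: s)
      thus "ev (z ^ a) f = 0" by (simp add: ab power_mult mult.commute)
    qed
  qed
qed

lemma galois:
  assumes "n > 0" "z ^ n = 1" "a > 0" "coprime a n" "ev z g = 0"
  shows "ev (z ^ a) g = 0"
proof -
  obtain f where mp: "minp z f" using minp_exists assms by blast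
  have "f dvd g" using mp assms by (simp add: minp_def)
  then obtain s where "g = f * s" by blast
  moreover have "ev (z ^ a) f = 0" using galois_aux[OF assms(1,3,4)] assms(2) mp by blast
  ultimately show ?thesis by simp
qed

definition E :: "nat \<Rightarrow> int \<Rightarrow> complex" where
  "E n x = cis (2 * pi * real_of_int x / real n)"

lemma E_add: "E n (x + y) = E n x * E n y"
  by (simp add: E_def cis_mult add_divide_distrib algebra_simps)

lemma E_mult_n: "n > 0 \<Longrightarrow> E n (int n * k) = 1"
proof -
  assume n: "n > 0"
  have "2 * pi * real_of_int (int n * k) / real n = 2 * pi * real_of_int k" using n by simp
  moreover have "cis (2 * pi * real_of_int k) = 1" by (rule cis_multiple_2pi) simp
  ultimately show ?thesis by (simp add: E_def)
qed

lemma E_mod: "n > 0 \<Longrightarrow> E n (x mod int n) = E n x"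
proof -
  assume n: "n > 0"
  have "E n x = E n (int n * (x div int n) + x mod int n)" by simp
  also have "\<dots> = E n (x mod int n)" by (simp only: E_add E_mult_n[OF n]) simp
  finally show ?thesis by simp
qed

lemma E_pow: "E n x ^ a = E n (int a * x)"
  by (simp add: E_def DeMoivre algebra_simps)

lemma E_cong: "n > 0 \<Longrightarrow> x mod int n = y mod int n \<Longrightarrow> E n x = E n y"
  by (metis E_mod)

lemma E_one_iff: "n > 0 \<Longrightarrow> E n m = 1 \<longleftrightarrow> int n dvd m"
proof
  assume n: "n > 0" and "E n m = 1"
  hence "cos (2 * pi * real_of_int m / real n) = 1" unfolding E_def by (metis cis.simps(1) one_complex.simps(1))
  then obtain j :: int where j: "2 * pi * real_of_int m / real n = real_of_int j * 2 * pi"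
    by (subst (asm) cos_one_2pi_int) blast
  hence "real_of_int m = real_of_int (j * int n)" using n by (simp add: field_simps)
  hence "m = j * int n" by (simp only: of_int_eq_iff)
  thus "int n dvd m" by simp
next
  assume n: "n > 0" and "int n dvd m"
  then obtain k where "m = int n * k" by blast
  thus "E n m = 1" using E_mult_n[OF n] by simp
qed

lemma geom:
  assumes k: "k > 0"
  shows "(\<Sum>b<k. E k (int b * m)) = (if int k dvd m then of_nat k else 0)"
proof -
  have eq: "E k (int b * m) = E k m ^ b" for b by (simp add: E_pow)
  show ?thesis
  proof (cases "int k dvd m")
    case True
    then have "E k m = 1" using E_one_iff k by blast
    then show ?thesis using True by (simp add: eq)
  next
    case False
    then have ne: "E k m \<noteq> 1" using E_one_iff k by blast
    have "E k m ^ k = 1" using E_pow[of k m k] E_mult_n[OF k, of m] by simp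
    then have "(\<Sum>b<k. E k m ^ b) = 0" using ne by (simp add: sum_gp_strict)
    then show ?thesis using False by (simp add: eq)
  qed
qed

lemma E_scale: "p > 0 \<Longrightarrow> E (p * q) (int (p * b) * m) = E q (int b * m)"
  by (simp add: E_def mult.assoc)

lemma coprime_prime_iff:
  fixes a p :: nat
  assumes "prime p"
  shows "coprime a p \<longleftrightarrow> \<not> p dvd a"
proof
  assume c: "coprime a p"
  show "\<not> p dvd a"
  proof
    assume "p dvd a"
    hence "is_unit p" using c coprime_common_divisor dvd_refl by blast
    thus False using assms by simp
  qed
next
  assume "\<not> p dvd a"
  thus "coprime a p" using prime_imp_coprime[OF assms] coprime_commute by blast
qed

lemma coprime_pq_iff:
  fixes a p q :: nat
  assumes "prime p" "prime q"
  shows "coprime a (p * q) \<longleftrightarrow> \<not> p dvd a \<and> \<not> q dvd a"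
  using coprime_prime_iff[OF assms(1)] coprime_prime_iff[OF assms(2)] by (simp add: coprime_mult_right_iff)

lemma sum_multiples:
  assumes "prime p" "prime q"
  shows "(\<Sum>a\<in>{a. a < p * q \<and> p dvd a}. E (p * q) (int a * m)) = (if int q dvd m then of_nat q else 0)"
proof -
  have p0: "p > 0" "q > 0" using assms prime_gt_0_nat by auto
  have Meq: "{a. a < p * q \<and> p dvd a} = (\<lambda>b. p * b) ` {..<q}"
  proof (intro set_eqI iffI)
    fix a assume "a \<in> {a. a < p * q \<and> p dvd a}"
    then obtain b where "a = p * b" "p * b < p * q" by auto
    thus "a \<in> (\<lambda>b. p * b) ` {..<q}" using p0 by auto
  next
    fix a assume "a \<in> (\<lambda>b. p * b) ` {..<q}"
    thus "a \<in> {a. a < p * q \<and> p dvd a}" using p0 by auto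
  qed
  have inj: "inj_on (\<lambda>b. p * b) {..<q}" using p0 by (auto simp: inj_on_def)
  have "(\<Sum>a\<in>{a. a < p * q \<and> p dvd a}. E (p * q) (int a * m)) = (\<Sum>b<q. E (p * q) (int (p * b) * m))"
    unfolding Meq by (subst sum.reindex[OF inj]) simp
  also have "\<dots> = (\<Sum>b<q. E q (int b * m))" using E_scale[OF p0(1)] by simp
  also have "\<dots> = (if int q dvd m then of_nat q else 0)" by (rule geom[OF p0(2)])
  finally show ?thesis .
qed

lemma ramanujan:
  assumes p: "prime p" and q: "prime q" and pq: "p \<noteq> q"
  shows "(\<Sum>a\<in>{a. a < p * q \<and> coprime a (p * q)}. E (p * q) (int a * m)) =
     of_int ((if int (p * q) dvd m then int (p * q) else 0) - (if int q dvd m then int q else 0)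
       - (if int p dvd m then int p else 0) + 1)"
proof -
  let ?f = "\<lambda>a. E (p * q) (int a * m)"
  let ?U = "{a. a < p * q \<and> coprime a (p * q)}"
  let ?Mp = "{a. a < p * q \<and> p dvd a}"
  let ?Mq = "{a. a < p * q \<and> q dvd a}"
  have p0: "p > 0" "q > 0" using prime_gt_0_nat[OF p] prime_gt_0_nat[OF q] by auto
  have n0: "p * q > 0" using p0 by simp
  have A: "{..<p * q} = ?U \<union> (?Mp \<union> ?Mq)" using coprime_pq_iff[OF p q] by auto
  have disj: "?U \<inter> (?Mp \<union> ?Mq) = {}" using coprime_pq_iff[OF p q] by auto
  have inter: "?Mp \<inter> ?Mq = {0}"
  proof (intro set_eqI iffI)
    fix a assume a: "a \<in> ?Mp \<inter> ?Mq"
    hence "p * q dvd a" using p q pq by (simp add: divides_mult primes_coprime)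
    thus "a \<in> {0}" using a by (auto dest: dvd_imp_le)
  qed (use p0 in auto)
  have sA: "sum ?f {..<p * q} = (if int (p * q) dvd m then of_nat (p * q) else 0)"
    using geom[OF n0, of m] by simp
  have h1: "sum ?f {..<p * q} = sum ?f ?U + sum ?f (?Mp \<union> ?Mq)"
    unfolding A by (rule sum.union_disjoint) (use disj in auto)
  have h2: "sum ?f (?Mp \<union> ?Mq) = sum ?f ?Mp + sum ?f ?Mq - sum ?f (?Mp \<inter> ?Mq)"
    by (rule sum_Un) auto
  have h3: "sum ?f ?Mp = (if int q dvd m then of_nat q else 0)" by (rule sum_multiples[OF p q])
  have h4: "sum ?f ?Mq = (if int p dvd m then of_nat p else 0)"
    using sum_multiples[OF q p, of m] by (simp add: mult.commute)
  have h5: "sum ?f (?Mp \<inter> ?Mq) = 1" unfolding inter by (simp add: E_def)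
  have "sum ?f ?U = sum ?f {..<p * q} - sum ?f ?Mp - sum ?f ?Mq + 1"
    using h1 h2 h5 by (simp add: algebra_simps)
  also have "\<dots> = (if int (p * q) dvd m then of_nat (p * q) else 0) - (if int q dvd m then of_nat q else 0)
       - (if int p dvd m then of_nat p else 0) + 1"
    by (simp only: sA h3 h4)
  finally show ?thesis by simp
qed

lemma sum_if_card:
  fixes N :: nat shows "(\<Sum>t<N. if P t then (c::int) else 0) = c * int (card {t. t < N \<and> P t})"
proof -
  have "(\<Sum>t\<in>{t\<in>{..<N}. P t}. c) = (\<Sum>t<N. if P t then c else 0)"
    using sum.inter_filter[OF finite_lessThan[of N], where g="\<lambda>_. c" and P=P] by simp
  moreover have "{t\<in>{..<N}. P t} = {t. t < N \<and> P t}" by auto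
  ultimately show ?thesis by (simp add: mult.commute)
qed

lemma count_eq:
  assumes p: "prime p" and q: "prime q" and pq: "p \<noteq> q"
    and hs: "(\<Sum>t<N. E (p * q) (e t)) = 0"
  shows "int (p * q) * int (card {t. t < N \<and> int (p * q) dvd e t - s})
     - int q * int (card {t. t < N \<and> int q dvd e t - s})
     - int p * int (card {t. t < N \<and> int p dvd e t - s}) + int N = 0"
proof -
  define n where "n = p * q"
  have p1: "p > 1" "q > 1" using p q prime_gt_1_nat by auto
  have n0: "n > 0" "n > 1" using p1 by (auto simp: n_def one_less_mult)
  define w where "w = E n 1"
  have wn: "w ^ n = 1" using E_pow[of n 1 n] E_mult_n[OF n0(1), of 1] by (simp add: w_def)
  have wk: "w ^ k = E n (int k)" for k using E_pow[of n 1 k] by (simp add: w_def)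
  define g where "g = (\<Sum>t<N. monom (1::int) (nat (e t mod int n)))"
  have evg: "ev z g = (\<Sum>t<N. z ^ nat (e t mod int n))" for z by (simp add: g_def ev_sum)
  have "ev w g = 0"
  proof -
    have "ev w g = (\<Sum>t<N. E n (e t))"
      unfolding evg wk using n0 by (intro sum.cong refl) (simp add: E_mod)
    thus ?thesis using hs by (simp add: n_def)
  qed
  have van: "(\<Sum>t<N. E n (int a * e t)) = 0" if a: "a \<in> {a. a < n \<and> coprime a n}" for a
  proof -
    have a0: "a > 0" using a n0 by (cases "a = 0") auto
    have "ev (w ^ a) g = 0" using galois[OF n0(1) wn a0 _ \<open>ev w g = 0\<close>] a by simp
    moreover have "ev (w ^ a) g = (\<Sum>t<N. E n (int a * e t))"
      unfolding evg
    proof (intro sum.cong refl)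
      fix t
      have "(w ^ a) ^ nat (e t mod int n) = w ^ (a * nat (e t mod int n))"
        by (simp add: power_mult)
      also have "\<dots> = E n (int (a * nat (e t mod int n)))" by (rule wk)
      also have "int (a * nat (e t mod int n)) = int a * (e t mod int n)"
        using n0 by simp
      also have "E n (int a * (e t mod int n)) = E n (int a * e t)"
        by (rule E_cong[OF n0(1)]) (rule mod_mult_right_eq)
      finally show "(w ^ a) ^ nat (e t mod int n) = E n (int a * e t)" .
    qed
    ultimately show ?thesis by simp
  qed
  define U where "U = {a. a < n \<and> coprime a n}"
  define R where "R = (\<lambda>m::int. (if int n dvd m then int n else 0) - (if int q dvd m then int q else 0)
       - (if int p dvd m then int p else 0) + 1)"
  have "0 = (\<Sum>a\<in>U. E n (- (int a * s)) * (\<Sum>t<N. E n (int a * e t)))"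
    using van by (simp add: U_def)
  also have "\<dots> = (\<Sum>a\<in>U. \<Sum>t<N. E n (int a * (e t - s)))"
    by (simp add: sum_distrib_left flip: E_add) (simp add: algebra_simps)
  also have "\<dots> = (\<Sum>t<N. \<Sum>a\<in>U. E n (int a * (e t - s)))" by (rule sum.swap)
  also have "\<dots> = (\<Sum>t<N. of_int (R (e t - s)))"
    unfolding U_def R_def n_def by (intro sum.cong refl ramanujan[OF p q pq])
  finally have "of_int (\<Sum>t<N. R (e t - s)) = (0::complex)" by simp
  hence "(\<Sum>t<N. R (e t - s)) = 0" by (simp only: of_int_eq_0_iff)
  moreover have "(\<Sum>t<N. R (e t - s)) =
      (\<Sum>t<N. if int n dvd e t - s then int n else 0) - (\<Sum>t<N. if int q dvd e t - s then int q else 0)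
      - (\<Sum>t<N. if int p dvd e t - s then int p else 0) + int N"
    by (simp add: R_def sum.distrib sum_subtractf)
  ultimately show ?thesis by (simp add: sum_if_card n_def)
qed

lemma one_exc:
  fixes C :: "int \<Rightarrow> int" and a b :: nat
  assumes b: "b \<ge> 2"
    and nn: "\<And>x. x \<in> {0..<int a} \<Longrightarrow> C x \<ge> 0 \<and> int b dvd C x - 1"
    and sm: "(\<Sum>x\<in>{0..<int a}. C x) = int a + int b"
  shows "\<exists>x0\<in>{0..<int a}. C x0 = int b + 1 \<and> (\<forall>x\<in>{0..<int a}. x \<noteq> x0 \<longrightarrow> C x = 1)"
proof -
  let ?T = "{0..<int a}"
  have ge1: "C x \<ge> 1" if x: "x \<in> ?T" for x
  proof (rule ccontr)
    assume "\<not> C x \<ge> 1"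
    with nn[OF x] have "C x = 0" by simp
    with nn[OF x] have "int b dvd (-1)" by simp
    hence "int b dvd 1" by simp
    with b show False by simp
  qed
  have s1: "(\<Sum>x\<in>?T. C x - 1) = int b" using sm by (simp add: sum_subtractf)
  have "\<exists>x0\<in>?T. C x0 \<noteq> 1"
  proof (rule ccontr)
    assume "\<not> (\<exists>x0\<in>?T. C x0 \<noteq> 1)"
    hence "\<forall>x\<in>?T. C x - 1 = 0" by simp
    hence "(\<Sum>x\<in>?T. C x - 1) = 0" by (simp only: sum.neutral)
    with s1 b show False by simp
  qed
  then obtain x0 where x0: "x0 \<in> ?T" "C x0 \<noteq> 1" by blast
  have pos: "C x0 - 1 > 0" using ge1[OF x0(1)] x0(2) by simp
  have "int b \<le> C x0 - 1" using nn[OF x0(1)] pos zdvd_imp_le by blast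
  have split: "(\<Sum>x\<in>?T. C x - 1) = (C x0 - 1) + (\<Sum>x\<in>?T - {x0}. C x - 1)"
    using x0(1) by (simp add: sum.remove)
  have rest_nn: "\<forall>x\<in>?T - {x0}. C x - 1 \<ge> 0"
  proof
    fix x assume "x \<in> ?T - {x0}"
    hence "x \<in> ?T" by blast
    from ge1[OF this] show "C x - 1 \<ge> 0" by simp
  qed
  hence "(\<Sum>x\<in>?T - {x0}. C x - 1) \<ge> 0" by (intro sum_nonneg) blast
  hence eqx0: "C x0 - 1 = int b" and rest0: "(\<Sum>x\<in>?T - {x0}. C x - 1) = 0"
    using split s1 \<open>int b \<le> C x0 - 1\<close> by linarith+
  have "\<forall>x\<in>?T - {x0}. C x - 1 = 0"
    using rest0 rest_nn sum_nonneg_eq_0_iff[of "?T - {x0}" "\<lambda>x. C x - 1"] by blast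
  then show ?thesis using x0(1) eqx0 by (intro bexI[of _ x0]) auto
qed

lemma fiber_sum:
  fixes f :: "nat \<Rightarrow> int" and h :: "nat \<Rightarrow> 'b :: comm_monoid_add"
  assumes m: "m > 0"
  shows "(\<Sum>x\<in>{0..<int m}. \<Sum>t\<in>{t. t < N \<and> f t mod int m = x}. h t) = (\<Sum>t<N. h t)"
proof -
  have "(\<Sum>x\<in>{0..<int m}. \<Sum>t\<in>{t \<in> {..<N}. f t mod int m = x}. h t) = (\<Sum>t\<in>{..<N}. h t)"
    by (rule sum.group) (use m in auto)
  moreover have "{t \<in> {..<N}. f t mod int m = x} = {t. t < N \<and> f t mod int m = x}" for x by auto
  ultimately show ?thesis by simp
qed

lemma van_structure:
  fixes e :: "nat \<Rightarrow> int"
  assumes p: "prime p" and q: "prime q" and pq: "p \<noteq> q" and N: "N = p + q"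
    and hs: "(\<Sum>t<N. E (p * q) (e t)) = 0"
  shows "\<exists>x0 y0. 0 \<le> x0 \<and> x0 < int p \<and> 0 \<le> y0 \<and> y0 < int q \<and>
     (\<forall>t<N. e t mod int q \<noteq> y0 \<longrightarrow> e t mod int p = x0) \<and>
     (\<forall>y. 0 \<le> y \<and> y < int q \<and> y \<noteq> y0 \<longrightarrow> card {t. t < N \<and> e t mod int q = y} \<le> 1) \<and>
     (\<Sum>t<N. e t mod int p) = (\<Sum>x\<in>{0..<int p}. x) + int q * x0"
proof -
  have p2: "p \<ge> 2" "q \<ge> 2" using p q prime_ge_2_nat by auto
  define Cp where "Cp x = int (card {t. t < N \<and> e t mod int p = x})" for x
  define Cq where "Cq y = int (card {t. t < N \<and> e t mod int q = y})" for y
  define cN where "cN s = int (card {t. t < N \<and> int (p * q) dvd e t - s})" for s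
  have setp: "{t. t < N \<and> int p dvd e t - s} = {t. t < N \<and> e t mod int p = s mod int p}" for s
    by (auto simp: mod_eq_dvd_iff)
  have setq: "{t. t < N \<and> int q dvd e t - s} = {t. t < N \<and> e t mod int q = s mod int q}" for s
    by (auto simp: mod_eq_dvd_iff)
  have K: "int p * int q * cN s - int q * Cq (s mod int q) - int p * Cp (s mod int p) + int N = 0" for s
    using count_eq[OF p q pq hs, of s] unfolding setp setq by (simp add: Cp_def Cq_def cN_def)
  have cop: "coprime (int p) (int q)" using p q pq by (simp add: primes_coprime)
  have dq: "int q dvd Cp x - 1" if x: "x \<in> {0..<int p}" for x
  proof -
    have "int p * (Cp (x mod int p) - 1) = int q * (int p * cN x - Cq (x mod int q) + 1)"
      using K[of x] N by (simp add: algebra_simps)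
    hence "int q dvd int p * (Cp (x mod int p) - 1)" by simp
    hence "int q dvd Cp (x mod int p) - 1" using cop coprime_commute coprime_dvd_mult_right_iff by metis
    thus ?thesis using x by simp
  qed
  have dp: "int p dvd Cq y - 1" if y: "y \<in> {0..<int q}" for y
  proof -
    have "int q * (Cq (y mod int q) - 1) = int p * (int q * cN y - Cp (y mod int p) + 1)"
      using K[of y] N by (simp add: algebra_simps)
    hence "int p dvd int q * (Cq (y mod int q) - 1)" by (metis dvd_triv_left)
    hence "int p dvd Cq (y mod int q) - 1" using cop coprime_dvd_mult_right_iff by metis
    thus ?thesis using y by simp
  qed
  have sumCp: "(\<Sum>x\<in>{0..<int p}. Cp x) = int p + int q"
  proof -
    have "(\<Sum>x\<in>{0..<int p}. \<Sum>t\<in>{t. t < N \<and> e t mod int p = x}. (1::int)) = (\<Sum>t<N. 1)"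
      by (rule fiber_sum) (use p2 in simp)
    thus ?thesis using N by (simp add: Cp_def)
  qed
  have sumCq: "(\<Sum>y\<in>{0..<int q}. Cq y) = int q + int p"
  proof -
    have "(\<Sum>y\<in>{0..<int q}. \<Sum>t\<in>{t. t < N \<and> e t mod int q = y}. (1::int)) = (\<Sum>t<N. 1)"
      by (rule fiber_sum) (use p2 in simp)
    thus ?thesis using N by (simp add: Cq_def)
  qed
  obtain x0 where x0: "x0 \<in> {0..<int p}" "Cp x0 = int q + 1" "\<forall>x\<in>{0..<int p}. x \<noteq> x0 \<longrightarrow> Cp x = 1"
    using one_exc[of q p Cp] p2 dq sumCp by (auto simp: Cp_def)
  obtain y0 where y0: "y0 \<in> {0..<int q}" "Cq y0 = int p + 1" "\<forall>y\<in>{0..<int q}. y \<noteq> y0 \<longrightarrow> Cq y = 1"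
    using one_exc[of p q Cq] p2 dp sumCq by (auto simp: Cq_def)
  have G1: "e t mod int p = x0" if t: "t < N" "e t mod int q \<noteq> y0" for t
  proof -
    have fin: "finite {t'. t' < N \<and> int (p * q) dvd e t' - e t}" by simp
    have "t \<in> {t'. t' < N \<and> int (p * q) dvd e t' - e t}" using t by simp
    hence "card {t'. t' < N \<and> int (p * q) dvd e t' - e t} \<ge> 1"
      using fin by (metis One_nat_def Suc_leI card_gt_0_iff empty_iff)
    hence c1: "cN (e t) \<ge> 1" by (simp add: cN_def)
    have "e t mod int q \<in> {0..<int q}" using p2 by simp
    hence cq1: "Cq (e t mod int q) = 1" using y0(3) t(2) by blast
    have "int p * Cp (e t mod int p) = int p * int q * cN (e t) + int p"
      using K[of "e t"] cq1 N by (simp add: algebra_simps)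
    also have "\<dots> \<ge> int p * int q + int p" using c1 p2 by simp
    finally have "int p * Cp (e t mod int p) \<ge> int p * (int q + 1)" by (simp add: algebra_simps)
    hence "Cp (e t mod int p) \<ge> int q + 1" using p2 by (simp add: mult_le_cancel_left_pos)
    hence "Cp (e t mod int p) \<noteq> 1" using p2 by simp
    moreover have "e t mod int p \<in> {0..<int p}" using p2 by simp
    ultimately show ?thesis using x0(3) by blast
  qed
  have G2: "card {t. t < N \<and> e t mod int q = y} \<le> 1" if "0 \<le> y" "y < int q" "y \<noteq> y0" for y
    using y0(3) that by (simp add: Cq_def)
  have G3: "(\<Sum>t<N. e t mod int p) = (\<Sum>x\<in>{0..<int p}. x) + int q * x0"
  proof -
    have "(\<Sum>t<N. e t mod int p) = (\<Sum>x\<in>{0..<int p}. \<Sum>t\<in>{t. t < N \<and> e t mod int p = x}. e t mod int p)"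
      by (rule fiber_sum[symmetric]) (use p2 in simp)
    also have "\<dots> = (\<Sum>x\<in>{0..<int p}. x * Cp x)"
      by (intro sum.cong refl) (simp add: Cp_def)
    also have "\<dots> = (\<Sum>x\<in>{0..<int p}. x + (if x = x0 then int q * x0 else 0))"
      using x0 by (intro sum.cong refl) (auto simp: algebra_simps)
    also have "\<dots> = (\<Sum>x\<in>{0..<int p}. x) + int q * x0"
      using x0(1) by (simp add: sum.distrib)
    finally show ?thesis .
  qed
  show ?thesis
    using x0(1) y0(1) G1 G2 G3 by (intro exI[of _ x0] exI[of _ y0]) auto
qed

lemma crt_uniq:
  fixes a b :: nat and x y :: int
  assumes "coprime (int a) (int b)" "x \<in> {0..<int (a * b)}" "y \<in> {0..<int (a * b)}"
    "x mod int a = y mod int a" "x mod int b = y mod int b"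
  shows "x = y"
proof -
  have "int a dvd x - y" "int b dvd x - y" using assms(4,5) by (simp_all add: mod_eq_dvd_iff)
  hence "int a * int b dvd x - y" using assms(1) by (simp add: divides_mult)
  then obtain k where k: "x - y = int a * int b * k" by blast
  have "\<bar>x - y\<bar> < int a * int b" using assms(2,3) by auto
  have "k = 0"
  proof (rule ccontr)
    assume "k \<noteq> 0"
    hence "1 \<le> \<bar>k\<bar>" by simp
    hence "int a * int b * 1 \<le> int a * int b * \<bar>k\<bar>" by (intro mult_left_mono) auto
    moreover have "\<bar>x - y\<bar> = int a * int b * \<bar>k\<bar>" using k by (simp add: abs_mult)
    ultimately show False using \<open>\<bar>x - y\<bar> < int a * int b\<close> by simp
  qed
  thus ?thesis using k by simp
qed

lemma side:
  fixes L :: "nat \<Rightarrow> int" and a b :: nat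
  assumes a: "prime a" and b: "prime b" and ab: "a \<noteq> b" and fin: "finite X" and cX: "card X = a - 1"
    and r: "0 \<le> r" "r < int (a * b)"
    and img: "L ` X = {x \<in> {0..<int (a * b)}. x mod int b = r mod int b} - {r}"
  shows "(\<forall>t\<in>X. L t mod int b = r mod int b \<and> L t mod int a \<noteq> r mod int a)
     \<and> (\<lambda>t. L t mod int a) ` X = {0..<int a} - {r mod int a}
     \<and> inj_on (\<lambda>t. L t mod int a) X"
proof -
  have cop: "coprime (int a) (int b)" using a b ab by (simp add: primes_coprime)
  have a2: "a \<ge> 2" "b \<ge> 2" using a b prime_ge_2_nat by auto
  have f1: "L t mod int b = r mod int b \<and> L t mod int a \<noteq> r mod int a" if t: "t \<in> X" for t
  proof -
    have Lt: "L t \<in> {x \<in> {0..<int (a * b)}. x mod int b = r mod int b} - {r}" using t img by blast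
    show ?thesis
    proof
      show "L t mod int b = r mod int b" using Lt by simp
      show "L t mod int a \<noteq> r mod int a"
      proof
        assume "L t mod int a = r mod int a"
        hence "L t = r" using crt_uniq[OF cop, of "L t" r] Lt r by simp
        thus False using Lt by simp
      qed
    qed
  qed
  have im: "(\<lambda>t. L t mod int a) ` X = {0..<int a} - {r mod int a}"
  proof (intro set_eqI iffI)
    fix v assume "v \<in> (\<lambda>t. L t mod int a) ` X"
    then obtain t where t: "t \<in> X" "v = L t mod int a" by blast
    thus "v \<in> {0..<int a} - {r mod int a}" using f1[OF t(1)] a2 by simp
  next
    fix v assume v: "v \<in> {0..<int a} - {r mod int a}"
    obtain x where x: "[x = v] (mod int a)" "[x = r] (mod int b)"
      using binary_chinese_remainder_int[OF cop] by blast
    define x' where "x' = x mod int (a * b)"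
    have x'r: "x' \<in> {0..<int (a * b)}" using a2 by (simp add: x'_def)
    have "x' mod int a = x mod int a" unfolding x'_def by (simp add: mod_mod_cancel)
    hence x'a: "x' mod int a = v" using x(1) v by (simp add: cong_def)
    have "x' mod int b = x mod int b" unfolding x'_def
      by (metis dvd_triv_right mod_mod_cancel of_nat_mult)
    hence x'b: "x' mod int b = r mod int b" using x(2) by (simp add: cong_def)
    have "x' \<noteq> r" using x'a v by auto
    hence "x' \<in> L ` X" using img x'r x'b by simp
    then obtain t where "t \<in> X" "x' = L t" by blast
    thus "v \<in> (\<lambda>t. L t mod int a) ` X" using x'a by blast
  qed
  have "card ((\<lambda>t. L t mod int a) ` X) = card X"
    using im cX a2 by simp
  hence "inj_on (\<lambda>t. L t mod int a) X" using fin eq_card_imp_inj_on by blast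
  thus ?thesis using f1 im by blast
qed

lemma Lij_range: "p * q > 0 \<Longrightarrow> 0 \<le> Lij p q m i j t \<and> Lij p q m i j t < int (p * q)"
  by (simp add: Lij_def)

lemma pqr_facts:
  assumes p: "prime p" and q: "prime q" and pq: "p \<noteq> q"
    and H: "is_PQR p q N m i j P Q R r"
  shows "(\<forall>t\<in>R. Lij p q m i j t = r)
    \<and> (\<forall>t\<in>P. Lij p q m i j t mod int q = r mod int q \<and> Lij p q m i j t mod int p \<noteq> r mod int p)
    \<and> (\<forall>t\<in>Q. Lij p q m i j t mod int p = r mod int p \<and> Lij p q m i j t mod int q \<noteq> r mod int q)
    \<and> inj_on (\<lambda>t. Lij p q m i j t mod int q) Q
    \<and> (\<lambda>t. Lij p q m i j t mod int p) ` P = {0..<int p} - {r mod int p}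
    \<and> inj_on (\<lambda>t. Lij p q m i j t mod int p) P
    \<and> (\<Sum>t<N. Lij p q m i j t mod int p) = (\<Sum>x\<in>{0..<int p}. x) + int q * (r mod int p)"
proof -
  let ?L = "Lij p q m i j"
  have p2: "p \<ge> 2" "q \<ge> 2" using p q prime_ge_2_nat by auto
  note H' = H[unfolded is_PQR_def]
  have U: "P \<union> Q \<union> R = {..<N}" using H' by (elim conjE) assumption
  have d1: "P \<inter> Q = {}" using H' by (elim conjE) assumption
  have d2: "P \<inter> R = {}" using H' by (elim conjE) assumption
  have d3: "Q \<inter> R = {}" using H' by (elim conjE) assumption
  have r: "r \<in> {0..<int (p * q)}" using H' by (elim conjE) assumption
  have cR: "card R = 2" using H' by (elim conjE) assumption
  have LR: "\<forall>k\<in>R. ?L k = r" using H' by (elim conjE) assumption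
  have cP: "card P = p - 1" using H' by (elim conjE) assumption
  have iP: "?L ` P = {x \<in> {0..<int (p * q)}. x mod int q = r mod int q} - {r}" using H' by (elim conjE) assumption
  have cQ: "card Q = q - 1" using H' by (elim conjE) assumption
  have iQ: "?L ` Q = {x \<in> {0..<int (p * q)}. x mod int p = r mod int p} - {r}" using H' by (elim conjE) assumption
  have "P \<subseteq> {..<N}" "Q \<subseteq> {..<N}" "R \<subseteq> {..<N}" using U by blast+
  hence finP: "finite P" and finQ: "finite Q" and finR: "finite R" by (auto intro: finite_subset)
  have SP: "(\<forall>t\<in>P. ?L t mod int q = r mod int q \<and> ?L t mod int p \<noteq> r mod int p)
     \<and> (\<lambda>t. ?L t mod int p) ` P = {0..<int p} - {r mod int p}
     \<and> inj_on (\<lambda>t. ?L t mod int p) P"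
    using side[OF p q pq finP cP, of r ?L] r iP by simp
  have iQ': "?L ` Q = {x \<in> {0..<int (q * p)}. x mod int p = r mod int p} - {r}"
    using iQ by (simp add: mult.commute)
  have SQ: "(\<forall>t\<in>Q. ?L t mod int p = r mod int p \<and> ?L t mod int q \<noteq> r mod int q)
     \<and> (\<lambda>t. ?L t mod int q) ` Q = {0..<int q} - {r mod int q}
     \<and> inj_on (\<lambda>t. ?L t mod int q) Q"
    using side[OF q p pq[symmetric] finQ cQ, of r ?L] r iQ' by (simp add: mult.commute)
  let ?f = "\<lambda>t. ?L t mod int p"
  have sP: "sum ?f P = (\<Sum>x\<in>{0..<int p}. x) - r mod int p"
  proof -
    have "sum (\<lambda>x. x) (?f ` P) = sum ((\<lambda>x. x) \<circ> ?f) P" by (rule sum.reindex) (use SP in blast)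
    hence "sum ?f P = sum (\<lambda>x. x) (?f ` P)" by (simp add: o_def)
    also have "\<dots> = sum (\<lambda>x. x) ({0..<int p} - {r mod int p})" using SP by simp
    also have "\<dots> = (\<Sum>x\<in>{0..<int p}. x) - r mod int p"
      using p2 by (subst sum_diff1) auto
    finally show ?thesis .
  qed
  have sQ: "sum ?f Q = (int q - 1) * (r mod int p)"
  proof -
    have "sum ?f Q = sum (\<lambda>_. r mod int p) Q" using SQ by (intro sum.cong) auto
    also have "\<dots> = int (card Q) * (r mod int p)" by simp
    finally show ?thesis using cQ p2 by (simp add: of_nat_diff)
  qed
  have sR: "sum ?f R = 2 * (r mod int p)"
  proof -
    have "sum ?f R = sum (\<lambda>_. r mod int p) R" using LR by (intro sum.cong) auto
    thus ?thesis using cR by simp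
  qed
  have "(\<Sum>t<N. ?f t) = sum ?f (P \<union> Q \<union> R)" using U by simp
  also have "\<dots> = sum ?f (P \<union> Q) + sum ?f R"
    by (rule sum.union_disjoint) (use finP finQ finR d2 d3 in auto)
  also have "sum ?f (P \<union> Q) = sum ?f P + sum ?f Q"
    by (rule sum.union_disjoint) (use finP finQ d1 in auto)
  finally have "(\<Sum>t<N. ?f t) = (\<Sum>x\<in>{0..<int p}. x) + int q * (r mod int p)"
    using sP sQ sR by (simp add: algebra_simps)
  thus ?thesis using SP SQ LR by blast
qed

lemma gauss_int: "(\<Sum>x\<in>{0..<int n}. x) * 2 = int n * (int n - 1)"
proof (induction n)
  case 0 then show ?case by simp
next
  case (Suc n)
  have "{0..<int (Suc n)} = insert (int n) {0..<int n}" by auto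
  hence "(\<Sum>x\<in>{0..<int (Suc n)}. x) = int n + (\<Sum>x\<in>{0..<int n}. x)" by simp
  thus ?case using Suc by (simp add: algebra_simps)
qed

lemma p_dvd_SA:
  assumes "prime p" "p \<ge> 3"
  shows "int p dvd (\<Sum>x\<in>{0..<int p}. x)"
proof -
  have "odd p" using assms prime_odd_nat by auto
  then obtain k where k: "p = 2 * k + 1" by (metis oddE)
  have "(\<Sum>x\<in>{0..<int p}. x) * 2 = int p * (2 * int k)" using gauss_int[of p] k by simp
  hence "(\<Sum>x\<in>{0..<int p}. x) = int p * int k" by simp
  thus ?thesis by simp
qed

lemma Lij_mod:
  assumes "d dvd p * q"
  shows "Lij p q m i j t mod int d = (m j t - m i t) mod int d"
proof -
  have "int d dvd int (p * q)" using assms by (simp only: int_dvd_int_iff)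
  thus ?thesis unfolding Lij_def by (rule mod_mod_cancel)
qed

lemma add_mod_inj:
  fixes b u v m :: int
  assumes "0 \<le> u" "u < m" "0 \<le> v" "v < m" "(b + u) mod m = (b + v) mod m"
  shows "u = v"
proof -
  have "m dvd (b + u) - (b + v)" using assms(5) by (simp add: mod_eq_dvd_iff)
  hence "m dvd u - v" by simp
  hence "u mod m = v mod m" by (simp add: mod_eq_dvd_iff)
  thus ?thesis using assms by simp
qed

lemma sum_mod_cong:
  fixes f g :: "nat \<Rightarrow> int"
  assumes "\<And>t. t \<in> A \<Longrightarrow> f t mod c = g t mod c"
  shows "sum f A mod c = sum g A mod c"
proof -
  have "sum f A mod c = (\<Sum>t\<in>A. f t mod c) mod c" by (simp add: mod_sum_eq)
  also have "(\<Sum>t\<in>A. f t mod c) = (\<Sum>t\<in>A. g t mod c)" using assms by (intro sum.cong) auto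
  also have "(\<Sum>t\<in>A. g t mod c) mod c = sum g A mod c" by (simp add: mod_sum_eq)
  finally show ?thesis .
qed

theorem lemma6p4:
  fixes p q N :: nat and m :: "nat \<Rightarrow> nat \<Rightarrow> int"
  assumes "prime p" and "prime q" and "p \<noteq> q" and "N = p + q"
    and "hadamard_exp p q N m"
    and "p \<ge> 5"
    and "i < N" and "j < N" and "k < N"
    and "i \<noteq> j" and "j \<noteq> k" and "i \<noteq> k"
    and "is_PQR p q N m i j Pij Qij Rij rij"
    and "is_PQR p q N m j k Pjk Qjk Rjk rjk"
  shows "card (Pij \<inter> Pjk) \<ge> 2"
proof -
  note p = assms(1) and q = assms(2) and pq = assms(3) and N = assms(4)
  have p2: "p \<ge> 2" "q \<ge> 2" using p q prime_ge_2_nat by auto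
  let ?L1 = "Lij p q m i j"
  let ?L2 = "Lij p q m j k"
  define a1 where "a1 = rij mod int p"
  define b1 where "b1 = rij mod int q"
  define c1 where "c1 = rjk mod int p"
  define d1 where "d1 = rjk mod int q"
  have F1: "(\<forall>t\<in>Rij. ?L1 t = rij)
    \<and> (\<forall>t\<in>Pij. ?L1 t mod int q = rij mod int q \<and> ?L1 t mod int p \<noteq> rij mod int p)
    \<and> (\<forall>t\<in>Qij. ?L1 t mod int p = rij mod int p \<and> ?L1 t mod int q \<noteq> rij mod int q)
    \<and> inj_on (\<lambda>t. ?L1 t mod int q) Qij
    \<and> (\<lambda>t. ?L1 t mod int p) ` Pij = {0..<int p} - {rij mod int p}
    \<and> inj_on (\<lambda>t. ?L1 t mod int p) Pij
    \<and> (\<Sum>t<N. ?L1 t mod int p) = (\<Sum>x\<in>{0..<int p}. x) + int q * (rij mod int p)"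
    by (rule pqr_facts[OF p q pq assms(13)])
  have F2: "(\<forall>t\<in>Rjk. ?L2 t = rjk)
    \<and> (\<forall>t\<in>Pjk. ?L2 t mod int q = rjk mod int q \<and> ?L2 t mod int p \<noteq> rjk mod int p)
    \<and> (\<forall>t\<in>Qjk. ?L2 t mod int p = rjk mod int p \<and> ?L2 t mod int q \<noteq> rjk mod int q)
    \<and> inj_on (\<lambda>t. ?L2 t mod int q) Qjk
    \<and> (\<lambda>t. ?L2 t mod int p) ` Pjk = {0..<int p} - {rjk mod int p}
    \<and> inj_on (\<lambda>t. ?L2 t mod int p) Pjk
    \<and> (\<Sum>t<N. ?L2 t mod int p) = (\<Sum>x\<in>{0..<int p}. x) + int q * (rjk mod int p)"
    by (rule pqr_facts[OF p q pq assms(14)])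
  have R1: "\<forall>t\<in>Rij. ?L1 t = rij" using F1 by blast
  have P1: "\<forall>t\<in>Pij. ?L1 t mod int q = b1 \<and> ?L1 t mod int p \<noteq> a1" using F1 by (simp add: a1_def b1_def)
  have sum1: "(\<Sum>t<N. ?L1 t mod int p) = (\<Sum>x\<in>{0..<int p}. x) + int q * a1" using F1 by (simp add: a1_def)
  have R2: "\<forall>t\<in>Rjk. ?L2 t = rjk" using F2 by blast
  have P2: "\<forall>t\<in>Pjk. ?L2 t mod int q = d1" using F2 by (simp add: d1_def)
  have Q2: "\<forall>t\<in>Qjk. ?L2 t mod int p = c1 \<and> ?L2 t mod int q \<noteq> d1" using F2 by (simp add: c1_def d1_def)
  have iQ2: "inj_on (\<lambda>t. ?L2 t mod int q) Qjk" using F2 by blast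
  have sum2: "(\<Sum>t<N. ?L2 t mod int p) = (\<Sum>x\<in>{0..<int p}. x) + int q * c1" using F2 by (simp add: c1_def)
  note H1 = assms(13)[unfolded is_PQR_def] and H2 = assms(14)[unfolded is_PQR_def]
  have U1: "Pij \<union> Qij \<union> Rij = {..<N}" using H1 by (elim conjE) assumption
  have U2: "Pjk \<union> Qjk \<union> Rjk = {..<N}" using H2 by (elim conjE) assumption
  have dPR1: "Pij \<inter> Rij = {}" using H1 by (elim conjE) assumption
  have cP1: "card Pij = p - 1" using H1 by (elim conjE) assumption
  have cR1: "card Rij = 2" using H1 by (elim conjE) assumption
  have cR2: "card Rjk = 2" using H2 by (elim conjE) assumption
  have "Pij \<subseteq> {..<N}" "Rij \<subseteq> {..<N}" "Pjk \<subseteq> {..<N}" "Qjk \<subseteq> {..<N}" "Rjk \<subseteq> {..<N}"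
    using U1 U2 by blast+
  hence finN: "finite Pij" "finite Rij" "finite Pjk" "finite Qjk" "finite Rjk"
    by (auto intro: finite_subset)
  define e where "e t = m k t - m i t" for t
  have hs: "(\<Sum>t<N. E (p * q) (e t)) = 0"
  proof -
    have "\<forall>i<N. \<forall>j<N. i \<noteq> j \<longrightarrow>
        (\<Sum>k<N. cis (2 * pi * real_of_int (m i k - m j k) / real (p * q))) = 0"
      using assms(5) unfolding hadamard_exp_def by blast
    hence "(\<Sum>t<N. cis (2 * pi * real_of_int (m k t - m i t) / real (p * q))) = 0"
      using assms(7,9,12) by blast
    thus ?thesis by (simp add: E_def e_def)
  qed
  obtain x0 y0 where x0: "0 \<le> x0" "x0 < int p" and y0: "0 \<le> y0" "y0 < int q"
    and G1: "\<forall>t<N. e t mod int q \<noteq> y0 \<longrightarrow> e t mod int p = x0"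
    and G2: "\<forall>y. 0 \<le> y \<and> y < int q \<and> y \<noteq> y0 \<longrightarrow> card {t. t < N \<and> e t mod int q = y} \<le> 1"
    and G3: "(\<Sum>t<N. e t mod int p) = (\<Sum>x\<in>{0..<int p}. x) + int q * x0"
    using van_structure[OF p q pq N hs] by blast
  have pd: "p dvd p * q" "q dvd p * q" by simp_all
  have ep: "e t mod int p = (?L1 t mod int p + ?L2 t mod int p) mod int p" for t
    by (simp add: Lij_mod[OF pd(1)] e_def mod_add_eq)
  have eq: "e t mod int q = (?L1 t mod int q + ?L2 t mod int q) mod int q" for t
    by (simp add: Lij_mod[OF pd(2)] e_def mod_add_eq)
  have x0eq: "x0 = (a1 + c1) mod int p"
  proof -
    let ?SA = "(\<Sum>x\<in>{0..<int p}. x)"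
    have "(\<Sum>t<N. e t mod int p) mod int p = (\<Sum>t<N. ?L1 t mod int p + ?L2 t mod int p) mod int p"
      by (rule sum_mod_cong) (simp add: ep)
    also have "(\<Sum>t<N. ?L1 t mod int p + ?L2 t mod int p) = ?SA + int q * a1 + (?SA + int q * c1)"
      by (simp add: sum.distrib sum1 sum2)
    finally have "(?SA + int q * x0) mod int p = (?SA + int q * a1 + (?SA + int q * c1)) mod int p"
      by (simp add: G3)
    hence "int p dvd (?SA + int q * x0) - (?SA + int q * a1 + (?SA + int q * c1))"
      by (simp add: mod_eq_dvd_iff)
    moreover have "int p dvd ?SA" using p_dvd_SA[OF p] assms(6) by simp
    ultimately have "int p dvd ((?SA + int q * x0) - (?SA + int q * a1 + (?SA + int q * c1))) + ?SA"
      by (rule dvd_add)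
    hence "int p dvd int q * (x0 - (a1 + c1))" by (simp add: algebra_simps)
    moreover have "coprime (int p) (int q)" using p q pq by (simp add: primes_coprime)
    ultimately have "int p dvd x0 - (a1 + c1)" using coprime_dvd_mult_right_iff by blast
    hence "x0 mod int p = (a1 + c1) mod int p" by (simp add: mod_eq_dvd_iff)
    thus ?thesis using x0 by simp
  qed
  have rng: "0 \<le> ?L1 t mod int p" "?L1 t mod int p < int p" "0 \<le> ?L2 t mod int q" "?L2 t mod int q < int q"
     "0 \<le> d1" "d1 < int q" for t
    using p2 by (simp_all add: d1_def)
  have a1r: "0 \<le> a1" "a1 < int p" using p2 by (simp_all add: a1_def)
  \<comment> \<open>key: an index of Pij \<union> Rij lying in Qjk with e t mod q \<noteq> y0 lies in Rij\<close>
  have keyA: "?L1 t mod int p = a1" if t: "t < N" "t \<in> Qjk" "e t mod int q \<noteq> y0" for t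
  proof -
    have "e t mod int p = x0" using G1 t by blast
    hence "(c1 + ?L1 t mod int p) mod int p = (c1 + a1) mod int p"
      using ep[of t] Q2 t(2) x0eq by (simp add: add.commute)
    thus ?thesis using add_mod_inj[of "?L1 t mod int p" "int p" a1 c1] rng a1r by simp
  qed
  show ?thesis
  proof (cases "y0 = (b1 + d1) mod int q")
    case True
    have disj: "Pij \<inter> Qjk = {}"
    proof (rule ccontr)
      assume "Pij \<inter> Qjk \<noteq> {}"
      then obtain t where t: "t \<in> Pij" "t \<in> Qjk" by blast
      have tN: "t < N" using t U1 by blast
      have "e t mod int q = (b1 + ?L2 t mod int q) mod int q" using eq[of t] P1 t(1) by simp
      moreover have "(b1 + ?L2 t mod int q) mod int q \<noteq> (b1 + d1) mod int q"
      proof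
        assume "(b1 + ?L2 t mod int q) mod int q = (b1 + d1) mod int q"
        hence "?L2 t mod int q = d1" using add_mod_inj[of "?L2 t mod int q" "int q" d1 b1] rng by simp
        thus False using Q2 t(2) by blast
      qed
      ultimately have "e t mod int q \<noteq> y0" using True by simp
      hence "?L1 t mod int p = a1" using keyA tN t(2) by blast
      thus False using P1 t(1) by blast
    qed
    have sub: "Pij \<subseteq> (Pij \<inter> Pjk) \<union> Rjk" using disj U1 U2 by blast
    have "p - 1 \<le> card ((Pij \<inter> Pjk) \<union> Rjk)"
      using card_mono[OF _ sub] finN cP1 by simp
    also have "\<dots> \<le> card (Pij \<inter> Pjk) + card Rjk" by (rule card_Un_le)
    finally show ?thesis using cR2 assms(6) by simp
  next
    case False
    let ?A = "Pij \<union> Rij"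
    let ?S1 = "{t. t < N \<and> e t mod int q = (b1 + d1) mod int q}"
    let ?S2 = "{t \<in> ?A \<inter> Qjk. e t mod int q = y0}"
    have cA: "card ?A = p + 1" using finN dPR1 cP1 cR1 p2 by (simp add: card_Un_disjoint)
    have bA: "?L1 t mod int q = b1" if "t \<in> ?A" for t using that P1 R1 by (auto simp: b1_def)
    have cS1: "card ?S1 \<le> 1" using G2 False p2 by simp
    have cS2: "card ?S2 \<le> 1"
    proof -
      have "?S2 \<subseteq> Qjk" by blast
      hence fin2: "finite ?S2" using finN(4) by (rule finite_subset)
      have all: "\<forall>t\<in>?S2. \<forall>t'\<in>?S2. t = t'"
      proof (intro ballI)
        fix t t' assume t: "t \<in> ?S2" and t': "t' \<in> ?S2"
        have tA: "t \<in> ?A" "t \<in> Qjk" "e t mod int q = y0" using t by blast+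
        have tA': "t' \<in> ?A" "t' \<in> Qjk" "e t' mod int q = y0" using t' by blast+
        have "e t mod int q = (b1 + ?L2 t mod int q) mod int q"
          using eq[of t] bA[OF tA(1)] by (simp add: mod_add_left_eq)
        moreover have "e t' mod int q = (b1 + ?L2 t' mod int q) mod int q"
          using eq[of t'] bA[OF tA'(1)] by (simp add: mod_add_left_eq)
        ultimately have "(b1 + ?L2 t mod int q) mod int q = (b1 + ?L2 t' mod int q) mod int q"
          using tA(3) tA'(3) by simp
        hence "?L2 t mod int q = ?L2 t' mod int q"
          using add_mod_inj[of "?L2 t mod int q" "int q" "?L2 t' mod int q" b1] rng by blast
        thus "t = t'" using inj_onD[OF iQ2] tA(2) tA'(2) by blast
      qed
      have "card ?S2 \<le> Suc 0" using card_le_Suc0_iff_eq[OF fin2] all by blast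
      thus ?thesis by simp
    qed
    have sub: "?A \<subseteq> ?S1 \<union> ?S2 \<union> Rij"
    proof
      fix t assume tA: "t \<in> ?A"
      have tN: "t < N" using tA U1 by blast
      show "t \<in> ?S1 \<union> ?S2 \<union> Rij"
      proof (cases "t \<in> Qjk")
        case False
        hence "t \<in> Pjk \<or> t \<in> Rjk" using tN U2 by blast
        hence "?L2 t mod int q = d1" using P2 R2 by (auto simp: d1_def)
        hence "e t mod int q = (b1 + d1) mod int q" using eq[of t] bA tA by simp
        thus ?thesis using tN by simp
      next
        case True
        show ?thesis
        proof (cases "e t mod int q = y0")
          case True2: True
          thus ?thesis using tA True by simp
        next
          case False2: False
          hence "?L1 t mod int p = a1" using keyA tN True by blast
          hence "t \<notin> Pij" using P1 by blast
          thus ?thesis using tA by blast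
        qed
      qed
    qed
    have "card ?A \<le> card (?S1 \<union> ?S2 \<union> Rij)" using card_mono[OF _ sub] finN by simp
    also have "\<dots> \<le> card (?S1 \<union> ?S2) + card Rij" by (rule card_Un_le)
    also have "card (?S1 \<union> ?S2) \<le> card ?S1 + card ?S2" by (rule card_Un_le)
    finally have "p + 1 \<le> 4" using cA cS1 cS2 cR1 by simp
    thus ?thesis using assms(6) by simp
  qed
qed

end
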